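(* Let $p$ be an odd prime and let $J$ be a finite family of $3p-3$ lattice points in $\mathbb{Z}^2$ (repetitions allowed). Then \[ 1-(p-1,J)-(p,J)+(2p-1,J)+(2p,J)\equiv 0 \pmod p. \]
   Context: For a finite family $X$ of lattice points in $\mathbb{Z}^2$ (points may repeat; subsets are subfamilies, i.e. subsets of the index set) and an integer $n\ge 0$, $(n,X)$ denotes the number of $n$-element subfamilies of $X$ whose coordinatewise sum is congruent to $(0,0)$ modulo $p$. *)

theory Defs
  imports "HOL-Computational_Algebra.Primes"
begin

text \<open>A finite family of lattice points is given as X :: nat \<Rightarrow> int \<times> int indexed by {..<N}.
  zs_count p n X N is the number of n-element subfamilies (subsets of the index set)
  whose coordinatewise sum is congruent to (0,0) modulo p.\<close>

definition zs_count :: "nat \<Rightarrow> nat \<Rightarrow> (nat \<Rightarrow> int \<times> int) \<Rightarrow> nat \<Rightarrow> nat" where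
  "zs_count p n X N = card {S. S \<subseteq> {..<N} \<and> card S = n \<and>
      (int p) dvd (\<Sum>i\<in>S. fst (X i)) \<and> (int p) dvd (\<Sum>i\<in>S. snd (X i))}"

end

theory Submission imports Defs "HOL-Number_Theory.Number_Theory" begin

definition w :: "nat set \<Rightarrow> int \<times> nat set \<Rightarrow> int" where
  "w S x = fst x * (if snd x \<subseteq> S then 1 else 0)"
definition pr :: "(int \<times> nat set) list \<Rightarrow> (int \<times> nat set) list \<Rightarrow> (int \<times> nat set) list" where
  "pr L L' = concat (map (\<lambda>x. map (\<lambda>y. (fst x * fst y, snd x \<union> snd y)) L') L)"
lemma w_mult: "w S x * w S y = w S (fst x * fst y, snd x \<union> snd y)"
  by (simp add: w_def)
lemma pr_sum: "sum_list (map (w S) L) * sum_list (map (w S) L') = sum_list (map (w S) (pr L L'))"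
proof (induction L)
  case Nil then show ?case by (simp add: pr_def)
next
  case (Cons x L)
  have "w S x * sum_list (map (w S) L') = sum_list (map (\<lambda>y. w S (fst x * fst y, snd x \<union> snd y)) L')"
    by (simp add: sum_list_const_mult[symmetric] w_mult o_def)
  then show ?case using Cons by (simp add: pr_def distrib_right o_def)
qed

definition lowdeg :: "nat set \<Rightarrow> nat \<Rightarrow> (nat set \<Rightarrow> int) \<Rightarrow> bool" where
"lowdeg I d f \<longleftrightarrow> (\<exists>L. (\<forall>x\<in>set L. snd x \<subseteq> I \<and> card (snd x) \<le> d) \<and>
   (\<forall>S\<subseteq>I. f S = sum_list (map (w S) L)))"

lemma lowdeg_const: "lowdeg I d (\<lambda>S. k)"
  unfolding lowdeg_def apply (rule exI[of _ "[(k,{})]"]) by (simp add: w_def)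

lemma lowdeg_mono: "lowdeg I d f \<Longrightarrow> d \<le> e \<Longrightarrow> lowdeg I e f"
  unfolding lowdeg_def by (meson order_trans)

lemma lowdeg_add: "lowdeg I d f \<Longrightarrow> lowdeg I d g \<Longrightarrow> lowdeg I d (\<lambda>S. f S + g S)"
  unfolding lowdeg_def
  apply (elim exE conjE)
  subgoal for L L'
    apply (rule exI[of _ "L @ L'"]) by (simp only: set_append ball_Un map_append sum_list_append) simp
  done

lemma lowdeg_mult: "lowdeg I d f \<Longrightarrow> lowdeg I e g \<Longrightarrow> lowdeg I (d+e) (\<lambda>S. f S * g S)"
  unfolding lowdeg_def
  apply (elim exE conjE)
  subgoal for L L'
    apply (rule exI[of _ "pr L L'"])
    apply (intro conjI)
     apply (simp add: pr_def)
     apply (meson Un_least order_trans[OF card_Un_le] add_mono)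
    by (simp add: pr_sum)
  done

lemma lowdeg_uminus: "lowdeg I d f \<Longrightarrow> lowdeg I d (\<lambda>S. - f S)"
  using lowdeg_mult[OF lowdeg_const[of I 0 "-1"], of d f] by simp

lemma lowdeg_pow: "lowdeg I d f \<Longrightarrow> lowdeg I (k*d) (\<lambda>S. f S ^ k)"
  by (induction k) (auto intro: lowdeg_const dest: lowdeg_mult)

lemma lowdeg_sum: "finite K \<Longrightarrow> (\<And>k. k \<in> K \<Longrightarrow> lowdeg I d (f k)) \<Longrightarrow> lowdeg I d (\<lambda>S. \<Sum>k\<in>K. f k S)"
  by (induction K rule: finite_induct) (auto intro: lowdeg_const lowdeg_add)

lemma lowdeg_lin: "finite I \<Longrightarrow> lowdeg I 1 (\<lambda>S. \<Sum>i\<in>S. a i)"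
  unfolding lowdeg_def
proof (rule exI[of _ "map (\<lambda>i. (a i, {i})) (sorted_list_of_set I)"], intro conjI allI impI)
  fix S assume "finite I" "S \<subseteq> I"
  have "(\<Sum>i\<in>S. a i) = (\<Sum>i\<in>I. w S (a i, {i}))"
  proof -
    have "(\<Sum>i\<in>I. w S (a i, {i})) = (\<Sum>i\<in>I. if i \<in> S then a i else 0)"
      by (intro sum.cong) (auto simp: w_def)
    also have "\<dots> = sum a (I \<inter> S)" by (rule sum.inter_restrict[symmetric]) fact
    also have "I \<inter> S = S" using \<open>S \<subseteq> I\<close> by auto
    finally show ?thesis by simp
  qed
  also have "\<dots> = sum_list (map (w S) (map (\<lambda>i. (a i, {i})) (sorted_list_of_set I)))"
    using \<open>finite I\<close> by (simp add: o_def sum_list_distinct_conv_sum_set)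
  finally show "(\<Sum>i\<in>S. a i) = sum_list (map (w S) (map (\<lambda>i. (a i, {i})) (sorted_list_of_set I)))" .
qed (auto)

lemma alt_base:
  assumes "finite I" "T \<subseteq> I" "card T < card I"
  shows "(\<Sum>S\<in>Pow I. (-1::int)^card S * (if T \<subseteq> S then 1 else 0)) = 0"
proof -
  from assms have "T \<noteq> I" by auto
  with assms obtain a where a: "a \<in> I" "a \<notin> T" by auto
  define I' where "I' = I - {a}"
  have I: "I = insert a I'" "a \<notin> I'" "finite I'" using a assms by (auto simp: I'_def)
  have disj: "Pow I' \<inter> insert a ` Pow I' = {}" using I by auto
  have inj: "inj_on (insert a) (Pow I')" using I unfolding inj_on_def by (metis insert_ident PowD subsetD)
  have "(\<Sum>S\<in>Pow I. (-1::int)^card S * (if T \<subseteq> S then 1 else 0))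
     = (\<Sum>S\<in>Pow I'. (-1::int)^card S * (if T \<subseteq> S then 1 else 0))
       + (\<Sum>S\<in>insert a ` Pow I'. (-1::int)^card S * (if T \<subseteq> S then 1 else 0))"
    unfolding I(1) Pow_insert using I disj by (intro sum.union_disjoint) auto
  also have "(\<Sum>S\<in>insert a ` Pow I'. (-1::int)^card S * (if T \<subseteq> S then 1 else 0))
     = (\<Sum>S\<in>Pow I'. (-1::int)^card (insert a S) * (if T \<subseteq> insert a S then 1 else 0))"
    by (simp add: sum.reindex[OF inj])
  also have "\<dots> = (\<Sum>S\<in>Pow I'. - ((-1::int)^card S * (if T \<subseteq> S then 1 else 0)))"
  proof (rule sum.cong)
    fix S assume "S \<in> Pow I'"
    then have "finite S" "a \<notin> S" using I finite_subset by auto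
    moreover have "T \<subseteq> insert a S \<longleftrightarrow> T \<subseteq> S" using a by auto
    ultimately show "(-1::int)^card (insert a S) * (if T \<subseteq> insert a S then 1 else 0) = - ((-1::int)^card S * (if T \<subseteq> S then 1 else 0))"
      by simp
  qed simp
  finally show ?thesis by (simp add: sum_negf)
qed

lemma lowdeg_alt:
  assumes "lowdeg I d f" "finite I" "d < card I"
  shows "(\<Sum>S\<in>Pow I. (-1::int)^card S * f S) = 0"
proof -
  from assms(1) obtain L where L: "\<forall>x\<in>set L. snd x \<subseteq> I \<and> card (snd x) \<le> d"
    "\<forall>S\<subseteq>I. f S = sum_list (map (w S) L)" unfolding lowdeg_def by blast
  have "(\<Sum>S\<in>Pow I. (-1::int)^card S * f S) = (\<Sum>S\<in>Pow I. (-1::int)^card S * sum_list (map (w S) L))"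
    using L(2) by (intro sum.cong) auto
  also have "\<dots> = 0" using L(1)
  proof (induction L)
    case Nil then show ?case by simp
  next
    case (Cons x L)
    obtain c T where x: "x = (c,T)" by fastforce
    have T: "T \<subseteq> I" "card T < card I" using Cons.prems x assms(3) by auto
    have "(\<Sum>S\<in>Pow I. (-1::int)^card S * w S x) =
       c * (\<Sum>S\<in>Pow I. (-1::int)^card S * (if T \<subseteq> S then 1 else 0))"
      by (simp add: sum_distrib_left algebra_simps w_def x)
    also have "\<dots> = 0" using alt_base[OF assms(2) T] by simp
    finally have 1: "(\<Sum>S\<in>Pow I. (-1::int)^card S * w S x) = 0" .
    have 2: "(\<Sum>S\<in>Pow I. (-1::int)^card S * sum_list (map (w S) L)) = 0"
      using Cons by auto
    show ?case using 1 2 by (simp add: distrib_left sum.distrib)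
  qed
  finally show ?thesis .
qed

definition chi :: "nat \<Rightarrow> int \<Rightarrow> int" where
  "chi p t = (if int p dvd t then 1 else 0)"

lemma fermat_chi:
  assumes "prime p"
  shows "[1 - t^(p-1) = chi p t] (mod int p)"
proof (cases "int p dvd t")
  case True
  have "p \<ge> 2" using assms prime_ge_2_nat by blast
  then have q: "p - 1 = Suc (p - 2)" by simp
  then have "int p dvd t^(p-1)" using True by simp
  then have "[t^(p-1) = 0] (mod int p)" by (simp add: cong_0_iff)
  then have "[1 - t^(p-1) = 1 - 0] (mod int p)" by (intro cong_diff cong_refl)
  then show ?thesis using True by (simp add: chi_def)
next
  case False
  define a where "a = nat (t mod int p)"
  have p0: "int p > 0" using assms prime_gt_0_nat by simp
  have ia: "int a = t mod int p" using p0 by (simp add: a_def)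
  have "\<not> p dvd a"
  proof
    assume "p dvd a"
    then have "int p dvd int a" by simp
    then have "int p dvd t mod int p" using ia by simp
    then show False using False by (simp add: dvd_mod_iff)
  qed
  then have "[a^(p-1) = 1] (mod p)" using fermat_theorem assms by blast
  then have "[int (a^(p-1)) = int 1] (mod int p)" by (simp only: cong_int_iff)
  then have "[int a^(p-1) = 1] (mod int p)" by simp
  moreover have "[t = int a] (mod int p)" using ia by (simp add: cong_def)
  then have "[t^(p-1) = int a^(p-1)] (mod int p)" by (rule cong_pow)
  ultimately have "[t^(p-1) = 1] (mod int p)" using cong_trans by blast
  then have "[1 - t^(p-1) = 1 - 1] (mod int p)" by (intro cong_diff cong_refl)
  then show ?thesis using False by (simp add: chi_def)
qed

lemma binom_diff:
  fixes c :: int assumes "n \<ge> 1"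
  shows "(\<Sum>k<n. of_nat (n choose k) * c^k) = (c+1)^n - c^n"
proof -
  have "(c+1)^n = (\<Sum>k\<le>n. of_nat (n choose k) * c^k * 1^(n-k))" by (rule binomial_ring)
  also have "\<dots> = (\<Sum>k<Suc n. of_nat (n choose k) * c^k)" by (simp add: lessThan_Suc_atMost)
  also have "\<dots> = (\<Sum>k<n. of_nat (n choose k) * c^k) + c^n" by simp
  finally show ?thesis by simp
qed

lemma h_value:
  assumes "prime p" "odd p" "k \<le> 3*p-3"
  shows "(-1::int)^k * (chi p (int k) - chi p (int k + 1)) =
    (if k = 0 then 1 else 0) - (if k = p-1 then 1 else 0) - (if k = p then 1 else 0)
    + (if k = 2*p-1 then 1 else 0) + (if k = 2*p then 1 else 0)"
proof -
  have p3: "p \<ge> 3" using assms prime_ge_2_nat[of p] by (cases "p = 2") auto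
  have c1: "chi p (int k) = (if k = 0 \<or> k = p \<or> k = 2*p then 1 else 0)"
  proof -
    have "p dvd k \<longleftrightarrow> k = 0 \<or> k = p \<or> k = 2*p"
    proof
      assume "p dvd k"
      then obtain m where m: "k = p*m" by blast
      have "p*m < p*3" using assms(3) p3 m by linarith
      then have "m < 3" by simp
      then have "m = 0 \<or> m = 1 \<or> m = 2" by auto
      then show "k = 0 \<or> k = p \<or> k = 2*p" using m by auto
    qed auto
    then show ?thesis unfolding chi_def by (simp only: int_dvd_int_iff)
  qed
  have c2: "chi p (int k + 1) = (if k = p - 1 \<or> k = 2*p - 1 then 1 else 0)"
  proof -
    have "p dvd (k+1) \<longleftrightarrow> k = p - 1 \<or> k = 2*p - 1"
    proof
      assume "p dvd (k+1)"
      then obtain m where m: "k + 1 = p*m" by blast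
      have "p*m < p*3" using assms(3) p3 m by linarith
      then have "m < 3" by simp
      moreover have "m \<noteq> 0" using m by (metis add_is_0 mult_0_right one_neq_zero)
      ultimately have "m = 1 \<or> m = 2" by auto
      then show "k = p - 1 \<or> k = 2*p - 1" using m by auto
    next
      assume "k = p - 1 \<or> k = 2*p - 1"
      then show "p dvd (k+1)" using p3 by auto
    qed
    moreover have "int k + 1 = int (k+1)" by simp
    ultimately show ?thesis unfolding chi_def by (simp only: int_dvd_int_iff)
  qed
  have e1: "(-1::int)^p = -1" "(-1::int)^(2*p) = 1" "(-1::int)^(p-1) = 1" "(-1::int)^(2*p-1) = -1"
    using assms(2) p3 by (auto simp: power_mult)
  show ?thesis using p3 e1 by (auto simp: c1 c2)
qed


theorem corollary1:
  fixes p :: nat and J :: "nat \<Rightarrow> int \<times> int"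
  assumes "prime p" and "odd p"
  shows "(int p) dvd (1 - int (zs_count p (p - 1) J (3*p - 3)) - int (zs_count p p J (3*p - 3))
            + int (zs_count p (2*p - 1) J (3*p - 3)) + int (zs_count p (2*p) J (3*p - 3)))"
proof -
  have p3: "p \<ge> 3" using assms prime_ge_2_nat[of p] by (cases "p = 2") auto
  define N where "N = 3*p-3"
  define I where "I = {..<N}"
  have fI: "finite I" and cI: "card I = N" by (auto simp: I_def)
  define A where "A S = (\<Sum>i\<in>S. fst (J i))" for S
  define B where "B S = (\<Sum>i\<in>S. snd (J i))" for S
  define g where "g S = (1 - A S^(p-1)) * (1 - B S^(p-1)) *
     (\<Sum>k<p-1. of_nat (p-1 choose k) * (int (card S))^k)" for S
  have lA: "lowdeg I (p-1) (\<lambda>S. 1 - A S^(p-1))"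
  proof -
    have "lowdeg I 1 A" unfolding A_def by (rule lowdeg_lin[OF fI])
    then have "lowdeg I ((p-1)*1) (\<lambda>S. A S^(p-1))" by (rule lowdeg_pow)
    then have "lowdeg I (p-1) (\<lambda>S. - (A S^(p-1)))" by (simp add: lowdeg_uminus)
    from lowdeg_add[OF lowdeg_const[of I "p-1" 1] this] show ?thesis by simp
  qed
  have lB: "lowdeg I (p-1) (\<lambda>S. 1 - B S^(p-1))"
  proof -
    have "lowdeg I 1 B" unfolding B_def by (rule lowdeg_lin[OF fI])
    then have "lowdeg I ((p-1)*1) (\<lambda>S. B S^(p-1))" by (rule lowdeg_pow)
    then have "lowdeg I (p-1) (\<lambda>S. - (B S^(p-1)))" by (simp add: lowdeg_uminus)
    from lowdeg_add[OF lowdeg_const[of I "p-1" 1] this] show ?thesis by simp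
  qed
  have lC: "lowdeg I (p-2) (\<lambda>S. \<Sum>k<p-1. of_nat (p-1 choose k) * (int (card S))^k)"
  proof (rule lowdeg_sum)
    fix k assume k: "k \<in> {..<p-1}"
    have "lowdeg I 1 (\<lambda>S. \<Sum>i\<in>S. 1)" by (rule lowdeg_lin[OF fI])
    then have "lowdeg I 1 (\<lambda>S. int (card S))" by simp
    then have "lowdeg I (k*1) (\<lambda>S. (int (card S))^k)" by (rule lowdeg_pow)
    then have "lowdeg I (0 + k*1) (\<lambda>S. of_nat (p-1 choose k) * (int (card S))^k)"
      by (rule lowdeg_mult[OF lowdeg_const])
    then show "lowdeg I (p-2) (\<lambda>S. of_nat (p-1 choose k) * (int (card S))^k)"
      using k by (auto elim: lowdeg_mono)
  qed simp
  have lg: "lowdeg I ((p-1)+(p-1)+(p-2)) g"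
    unfolding g_def by (intro lowdeg_mult lA lB lC)
  have F: "(\<Sum>S\<in>Pow I. (-1::int)^card S * g S) = 0"
    using lowdeg_alt[OF lg fI] p3 cI N_def by simp
  define E where "E S = (-1::int)^card S * (chi p (A S) * chi p (B S) *
        (chi p (int (card S)) - chi p (int (card S) + 1)))" for S
  have cg: "[(-1::int)^card S * g S = E S] (mod int p)" for S
  proof -
    let ?c = "int (card S)"
    have "p - 1 \<ge> 1" using p3 by simp
    then have gS: "g S = (1 - A S^(p-1)) * (1 - B S^(p-1)) *
          ((1 - ?c^(p-1)) - (1 - (?c+1)^(p-1)))"
      unfolding g_def using binom_diff[of "p-1" ?c] by simp
    have "[(1 - ?c^(p-1)) - (1 - (?c+1)^(p-1)) = chi p ?c - chi p (?c+1)] (mod int p)"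
      by (intro cong_diff fermat_chi assms(1))
    then have "[g S = chi p (A S) * chi p (B S) * (chi p ?c - chi p (?c+1))] (mod int p)"
      unfolding gS by (intro cong_mult fermat_chi assms(1))
    then show ?thesis unfolding E_def by (intro cong_mult cong_refl)
  qed
  have "[(\<Sum>S\<in>Pow I. (-1::int)^card S * g S) = (\<Sum>S\<in>Pow I. E S)] (mod int p)"
    by (rule cong_sum) (rule cg)
  then have dv: "int p dvd (\<Sum>S\<in>Pow I. E S)" using F by (metis cong_0_iff cong_sym)
  define Z where "Z = {S\<in>Pow I. int p dvd A S \<and> int p dvd B S}"
  have fZ: "finite Z" using fI by (simp add: Z_def)
  define ind :: "nat \<Rightarrow> nat set \<Rightarrow> int" where "ind n S = (if card S = n then 1 else (0::int))" for n S
  have "(\<Sum>S\<in>Pow I. E S) = (\<Sum>S\<in>Pow I. if S \<in> Z then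
         (-1::int)^card S * (chi p (int (card S)) - chi p (int (card S) + 1)) else 0)"
    by (intro sum.cong) (auto simp: E_def Z_def chi_def)
  also have "\<dots> = (\<Sum>S\<in>Z. (-1::int)^card S * (chi p (int (card S)) - chi p (int (card S) + 1)))"
  proof -
    have PZ: "Pow I \<inter> Z = Z" by (auto simp: Z_def)
    have fP: "finite (Pow I)" using fI by simp
    show ?thesis using sum.inter_restrict[OF fP, of "\<lambda>S. (-1::int)^card S * (chi p (int (card S)) - chi p (int (card S) + 1))" Z]
      by (simp only: PZ)
  qed
  also have "\<dots> = (\<Sum>S\<in>Z. ind 0 S - ind (p-1) S - ind p S + ind (2*p-1) S + ind (2*p) S)"
  proof (rule sum.cong)
    fix S assume "S \<in> Z"
    then have "S \<subseteq> I" by (simp add: Z_def)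
    then have "card S \<le> 3*p-3" using card_mono[OF fI] cI N_def by fastforce
    then show "(-1::int)^card S * (chi p (int (card S)) - chi p (int (card S) + 1)) =
       ind 0 S - ind (p-1) S - ind p S + ind (2*p-1) S + ind (2*p) S"
      unfolding ind_def by (rule h_value[OF assms])
  qed simp
  also have "\<dots> = sum (ind 0) Z - sum (ind (p-1)) Z - sum (ind p) Z + sum (ind (2*p-1)) Z + sum (ind (2*p)) Z"
    by (simp add: sum.distrib sum_subtractf)
  finally have eq: "(\<Sum>S\<in>Pow I. E S) = sum (ind 0) Z - sum (ind (p-1)) Z - sum (ind p) Z + sum (ind (2*p-1)) Z + sum (ind (2*p)) Z" .
  have cnt: "sum (ind n) Z = int (zs_count p n J N)" for n
  proof -
    have "sum (ind n) Z = (\<Sum>S\<in>Z. if S \<in> {S. card S = n} then 1 else 0)"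
      by (simp add: ind_def)
    also have "\<dots> = (\<Sum>S\<in>Z \<inter> {S. card S = n}. 1)" by (rule sum.inter_restrict[OF fZ, symmetric])
    also have "\<dots> = int (card (Z \<inter> {S. card S = n}))" by simp
    also have "Z \<inter> {S. card S = n} = {S. S \<subseteq> {..<N} \<and> card S = n \<and>
      (int p) dvd (\<Sum>i\<in>S. fst (J i)) \<and> (int p) dvd (\<Sum>i\<in>S. snd (J i))}"
      by (auto simp: Z_def I_def A_def B_def)
    finally show ?thesis by (simp add: zs_count_def)
  qed
  have z0: "zs_count p 0 J N = 1"
  proof -
    have "{S. S \<subseteq> {..<N} \<and> card S = 0 \<and>
      (int p) dvd (\<Sum>i\<in>S. fst (J i)) \<and> (int p) dvd (\<Sum>i\<in>S. snd (J i))} = {{}}"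
      using finite_subset[of _ "{..<N}"] by auto
    then show ?thesis by (simp add: zs_count_def)
  qed
  show ?thesis using dv eq cnt z0 N_def by simp
qed

end
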